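(* Let $d\ge 2$, $s\ge1$ and $(\alpha,\beta) \in \mathsf{Brac}_{d,s}$. Then for every $i \in [d]$ with $\beta_i \geq 1-1/s$, $$\sqrt{\alpha_i}\sqrt{s \beta_i - (s-1)} \leq s \sum_{j\in[d],\,j \neq i} \sqrt{\alpha_j \beta_j}.$$
   Context: $[d]=\{1,\dots,d\}$, $\Delta_d=\{\alpha\in\mathbb R^d:\alpha_i\ge0,\ \sum_i\alpha_i=1\}$. For $s\ge1$, $\mathsf{Brac}_{d,s}$ is the set of $(\alpha,\beta)\in\Delta_d^2$ for which there exist $A_1,\dots,A_d,B_1,\dots,B_d\in M_s(\mathbb C)$ with $\sum_i A_iA_i^*=\sum_iB_iB_i^*=I_s$, $\sum_iA_iB_i^*=0$, and $\tfrac1s\|A_i\|_F^2=\alpha_i$, $\tfrac1s\|B_i\|_F^2=\beta_i$ for all $i$, where $\|X\|_F=\operatorname{Tr}(XX^* )^{1/2}$. *)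

theory Defs
  imports Complex_Main
begin

text \<open>Matrices in M_s(C) are represented as functions nat => nat => complex,
  only entries with indices < s being relevant; a d-tuple of matrices
  A_1..A_d is a function A :: nat => nat => nat => complex with matrix index i < d
  (0-based, so [d] = {0..<d}).\<close>

definition simplex :: "nat \<Rightarrow> (nat \<Rightarrow> real) \<Rightarrow> bool" where
  "simplex d a \<longleftrightarrow> (\<forall>i<d. a i \<ge> 0) \<and> (\<Sum>i<d. a i) = 1"

definition mat_sum_prod_adj ::
  "nat \<Rightarrow> nat \<Rightarrow> (nat \<Rightarrow> nat \<Rightarrow> nat \<Rightarrow> complex) \<Rightarrow> (nat \<Rightarrow> nat \<Rightarrow> nat \<Rightarrow> complex)
   \<Rightarrow> nat \<Rightarrow> nat \<Rightarrow> complex" where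
  "mat_sum_prod_adj d s A B a b = (\<Sum>i<d. \<Sum>k<s. A i a k * cnj (B i b k))"

definition frob_sq :: "nat \<Rightarrow> (nat \<Rightarrow> nat \<Rightarrow> complex) \<Rightarrow> real" where
  "frob_sq s M = (\<Sum>a<s. \<Sum>k<s. (cmod (M a k))^2)"

definition Brac :: "nat \<Rightarrow> nat \<Rightarrow> ((nat \<Rightarrow> real) \<times> (nat \<Rightarrow> real)) set" where
  "Brac d s = {(\<alpha>, \<beta>). simplex d \<alpha> \<and> simplex d \<beta> \<and>
     (\<exists>A B :: nat \<Rightarrow> nat \<Rightarrow> nat \<Rightarrow> complex.
        (\<forall>a<s. \<forall>b<s. mat_sum_prod_adj d s A A a b = (if a = b then 1 else 0)) \<and>
        (\<forall>a<s. \<forall>b<s. mat_sum_prod_adj d s B B a b = (if a = b then 1 else 0)) \<and>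
        (\<forall>a<s. \<forall>b<s. mat_sum_prod_adj d s A B a b = 0) \<and>
        (\<forall>i<d. frob_sq s (A i) / real s = \<alpha> i \<and> frob_sq s (B i) / real s = \<beta> i))}"

end

theory Submission imports Defs "HOL-Analysis.L2_Norm" "HOL-Analysis.Convex" begin

lemma cs_complex:
  fixes f g :: "'a \<Rightarrow> complex"
  shows "(cmod (\<Sum>k\<in>K. f k * g k))^2 \<le> (\<Sum>k\<in>K. (cmod (f k))^2) * (\<Sum>k\<in>K. (cmod (g k))^2)"
proof -
  have "cmod (\<Sum>k\<in>K. f k * g k) \<le> (\<Sum>k\<in>K. cmod (f k) * cmod (g k))"
    by (metis (no_types, lifting) norm_mult norm_sum sum.cong)
  hence "(cmod (\<Sum>k\<in>K. f k * g k))^2 \<le> (\<Sum>k\<in>K. cmod (f k) * cmod (g k))^2"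
    by (simp add: power_mono)
  also have "\<dots> \<le> (\<Sum>k\<in>K. (cmod (f k))^2) * (\<Sum>k\<in>K. (cmod (g k))^2)"
    by (rule Cauchy_Schwarz_ineq_sum)
  finally show ?thesis .
qed

lemma L2_set_sum_le:
  assumes "finite J"
  shows "L2_set (\<lambda>x. \<Sum>j\<in>J. f j x) A \<le> (\<Sum>j\<in>J. L2_set (f j) A)"
  using assms
proof (induction J rule: finite_induct)
  case empty
  then show ?case by (simp add: L2_set_def)
next
  case (insert j J)
  have "L2_set (\<lambda>x. \<Sum>j\<in>insert j J. f j x) A = L2_set (\<lambda>x. f j x + (\<Sum>j\<in>J. f j x)) A"
    using insert by simp
  also have "\<dots> \<le> L2_set (f j) A + L2_set (\<lambda>x. \<Sum>j\<in>J. f j x) A"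
    by (rule L2_set_triangle_ineq)
  also have "\<dots> \<le> L2_set (f j) A + (\<Sum>j\<in>J. L2_set (f j) A)"
    using insert by simp
  finally show ?case using insert by simp
qed

definition nrm :: "nat \<Rightarrow> (nat \<Rightarrow> complex) \<Rightarrow> real" where
  "nrm s x = (\<Sum>k<s. (cmod (x k))^2)"
definition mv :: "nat \<Rightarrow> (nat \<Rightarrow> nat \<Rightarrow> complex) \<Rightarrow> (nat \<Rightarrow> complex) \<Rightarrow> nat \<Rightarrow> complex" where
  "mv s B x = (\<lambda>b. \<Sum>k<s. B b k * x k)"
definition mva :: "nat \<Rightarrow> (nat \<Rightarrow> nat \<Rightarrow> complex) \<Rightarrow> (nat \<Rightarrow> complex) \<Rightarrow> nat \<Rightarrow> complex" where
  "mva s B y = (\<lambda>k. \<Sum>b<s. cnj (B b k) * y b)"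

lemma cmod_sq: "complex_of_real ((cmod z)^2) = z * cnj z"
  by (simp add: complex_mult_cnj cmod_def)

lemma nrm_cplx: "complex_of_real (nrm s x) = (\<Sum>k<s. x k * cnj (x k))"
  by (simp only: nrm_def of_real_sum cmod_sq)

lemma nrm_nonneg: "nrm s x \<ge> 0"
  by (simp add: nrm_def sum_nonneg)

lemma adj: "(\<Sum>k<s. cnj (x k) * mva s B y k) = (\<Sum>b<s. cnj (mv s B x b) * y b)"
  unfolding mva_def mv_def
  apply (simp add: sum_distrib_left sum_distrib_right mult_ac)
  by (rule sum.swap)


lemma sq_sum: "(\<Sum>b\<in>S. f b) * cnj (\<Sum>b\<in>S. f b) = (\<Sum>b\<in>S. \<Sum>c\<in>S. f b * cnj (f c))"
  apply (simp add: sum_distrib_left sum_distrib_right)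
  by (rule sum.swap)

lemma swap4: "(\<Sum>j\<in>J. \<Sum>k\<in>K. \<Sum>b\<in>S. \<Sum>c\<in>S. f j k b c) = (\<Sum>b\<in>S. \<Sum>c\<in>S. \<Sum>j\<in>J. \<Sum>k\<in>K. f j k b c)"
  by (simp only: sum.swap[of _ K S] sum.swap[of _ J S])

lemma sumB:
  assumes HB: "\<forall>a<s. \<forall>b<s. mat_sum_prod_adj d s B B a b = (if a = b then 1 else 0)"
  shows "(\<Sum>j<d. nrm s (mva s (B j) y)) = nrm s y"
proof -
  have "complex_of_real (\<Sum>j<d. nrm s (mva s (B j) y))
      = (\<Sum>j<d. \<Sum>k<s. \<Sum>b<s. \<Sum>c<s. (cnj (B j b k) * y b) * cnj (cnj (B j c k) * y c))"
    by (simp only: of_real_sum nrm_cplx mva_def sq_sum)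
  also have "\<dots> = (\<Sum>b<s. \<Sum>c<s. \<Sum>j<d. \<Sum>k<s. (cnj (B j b k) * y b) * cnj (cnj (B j c k) * y c))"
    by (rule swap4)
  also have "\<dots> = (\<Sum>b<s. \<Sum>c<s. y b * cnj (y c) * mat_sum_prod_adj d s B B c b)"
    unfolding mat_sum_prod_adj_def
    by (simp add: sum_distrib_left mult_ac)
  also have "\<dots> = (\<Sum>b<s. \<Sum>c<s. if c = b then y b * cnj (y c) else 0)"
    by (intro sum.cong refl) (simp add: HB)
  also have "\<dots> = complex_of_real (nrm s y)"
    by (simp add: nrm_cplx)
  finally show ?thesis by (simp only: of_real_eq_iff)
qed


definition Nop :: "nat \<Rightarrow> (nat \<Rightarrow> nat \<Rightarrow> complex) \<Rightarrow> (nat \<Rightarrow> complex) \<Rightarrow> nat \<Rightarrow> complex" where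
  "Nop s B x = (\<lambda>k. x k - mva s B (mv s B x) k)"

definition ev :: "nat \<Rightarrow> nat \<Rightarrow> complex" where
  "ev a = (\<lambda>k. if k = a then 1 else 0)"

lemma nrm_diff:
  "complex_of_real (nrm s (\<lambda>k. u k - w k)) = complex_of_real (nrm s u)
     - (\<Sum>k<s. cnj (u k) * w k) - cnj (\<Sum>k<s. cnj (u k) * w k) + complex_of_real (nrm s w)"
  by (simp add: nrm_cplx algebra_simps sum_subtractf sum.distrib)

lemma adjB: "(\<Sum>k<s. cnj (x k) * mva s B (mv s B x) k) = complex_of_real (nrm s (mv s B x))"
  by (simp add: adj nrm_cplx mult.commute)

lemma N1:
  assumes HBy: "\<And>y. nrm s (mva s B y) \<le> nrm s y"
  shows "nrm s (Nop s B x) \<le> nrm s x - nrm s (mv s B x)"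
proof -
  have "complex_of_real (nrm s (Nop s B x)) = complex_of_real (nrm s x - 2 * nrm s (mv s B x) + nrm s (mva s B (mv s B x)))"
    unfolding Nop_def nrm_diff adjB by simp
  hence "nrm s (Nop s B x) = nrm s x - 2 * nrm s (mv s B x) + nrm s (mva s B (mv s B x))"
    by (simp only: of_real_eq_iff)
  thus ?thesis using HBy[of "mv s B x"] by simp
qed

lemma Nq: "(\<Sum>k<s. cnj (x k) * Nop s B x k) = complex_of_real (nrm s x - nrm s (mv s B x))"
  unfolding Nop_def by (simp add: algebra_simps sum_subtractf adjB nrm_cplx)

lemma Nq2: "(nrm s x - nrm s (mv s B x))^2 \<le> nrm s x * nrm s (Nop s B x)"
proof -
  have "(nrm s x - nrm s (mv s B x))^2 = (cmod (\<Sum>k<s. cnj (x k) * Nop s B x k))^2"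
    by (simp add: Nq del: of_real_diff)
  also have "\<dots> \<le> (\<Sum>k<s. (cmod (cnj (x k)))^2) * (\<Sum>k<s. (cmod (Nop s B x k))^2)"
    by (rule cs_complex)
  also have "\<dots> = nrm s x * nrm s (Nop s B x)" by (simp add: nrm_def)
  finally show ?thesis .
qed

lemma Nlin:
  assumes "k < s"
  shows "Nop s B x k = (\<Sum>a<s. Nop s B (ev a) k * x a)"
proof -
  have e: "(\<Sum>k'<s. B b k' * ev a k') = B b a" if "a < s" for a b
  proof -
    have "(\<Sum>k'<s. B b k' * ev a k') = (\<Sum>k'<s. if k' = a then B b k' else 0)"
      by (rule sum.cong) (auto simp: ev_def)
    then show ?thesis using that by simp
  qed
  have "(\<Sum>a<s. Nop s B (ev a) k * x a)
      = (\<Sum>a<s. ((if k = a then 1 else 0) - (\<Sum>b<s. cnj (B b k) * B b a)) * x a)"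
    by (intro sum.cong refl) (simp add: Nop_def mva_def mv_def e ev_def[symmetric], simp add: ev_def)
  also have "\<dots> = x k - (\<Sum>a<s. \<Sum>b<s. cnj (B b k) * B b a * x a)"
  proof -
    have d: "(\<Sum>a<s. (if k = a then 1 else 0) * x a) = x k"
    proof -
      have "(\<Sum>a<s. (if k = a then 1 else 0) * x a) = (\<Sum>a<s. if k = a then x a else 0)"
        by (rule sum.cong) auto
      then show ?thesis using assms by simp
    qed
    show ?thesis
      by (simp only: left_diff_distrib sum_subtractf d sum_distrib_right mult.assoc)
  qed
  also have "\<dots> = x k - (\<Sum>b<s. \<Sum>a<s. cnj (B b k) * B b a * x a)"
    by (subst sum.swap) (rule refl)
  also have "\<dots> = Nop s B x k"
    by (simp add: Nop_def mva_def mv_def sum_distrib_left mult.assoc)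
  finally show ?thesis by simp
qed


lemma mv_ev: "a < s \<Longrightarrow> mv s B (ev a) b = B b a"
proof -
  assume a: "a < s"
  have "(\<Sum>k'<s. B b k' * ev a k') = (\<Sum>k'<s. if k' = a then B b k' else 0)"
    by (rule sum.cong) (auto simp: ev_def)
  then show ?thesis using a by (simp add: mv_def)
qed

lemma nrm_ev: "a < s \<Longrightarrow> nrm s (ev a) = 1"
proof -
  assume a: "a < s"
  have "nrm s (ev a) = (\<Sum>k<s. if k = a then 1 else 0)"
    unfolding nrm_def by (rule sum.cong) (auto simp: ev_def)
  then show ?thesis using a by simp
qed

lemma Nbound1: "nrm s (Nop s B x) \<le> (\<Sum>a<s. nrm s (Nop s B (ev a))) * nrm s x"
proof -
  have "nrm s (Nop s B x) = (\<Sum>k<s. (cmod (\<Sum>a<s. Nop s B (ev a) k * x a))^2)"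
    unfolding nrm_def by (rule sum.cong) (auto simp: Nlin[symmetric])
  also have "\<dots> \<le> (\<Sum>k<s. (\<Sum>a<s. (cmod (Nop s B (ev a) k))^2) * nrm s x)"
    unfolding nrm_def by (rule sum_mono) (rule cs_complex)
  also have "\<dots> = (\<Sum>a<s. \<Sum>k<s. (cmod (Nop s B (ev a) k))^2) * nrm s x"
    unfolding sum_distrib_right[symmetric] by (subst sum.swap) (rule refl)
  also have "\<dots> = (\<Sum>a<s. nrm s (Nop s B (ev a))) * nrm s x"
    by (simp add: nrm_def)
  finally show ?thesis .
qed

lemma Nbound2:
  assumes HBy: "\<And>y. nrm s (mva s B y) \<le> nrm s y"
  shows "(\<Sum>a<s. nrm s (Nop s B (ev a))) \<le> real s - frob_sq s B"
proof -
  have "(\<Sum>a<s. nrm s (Nop s B (ev a))) \<le> (\<Sum>a<s. nrm s (ev a) - nrm s (mv s B (ev a)))"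
    by (rule sum_mono) (rule N1[OF HBy])
  also have "\<dots> = (\<Sum>a<s. 1 - (\<Sum>b<s. (cmod (B b a))^2))"
    apply (rule sum.cong, rule refl)
    apply (subst nrm_ev, simp)
    apply (simp add: nrm_def mv_ev)
    done
  also have "\<dots> = real s - (\<Sum>a<s. \<Sum>b<s. (cmod (B b a))^2)"
    by (simp add: sum_subtractf)
  also have "\<dots> = real s - frob_sq s B"
    unfolding frob_sq_def by (subst sum.swap) (rule refl)
  finally show ?thesis .
qed


lemma lower:
  assumes s1: "s \<ge> 1" and HBy: "\<And>y. nrm s (mva s B y) \<le> nrm s y"
    and t1: "real s - frob_sq s B \<le> 1"
  shows "(1 - (real s - frob_sq s B)) / real s * nrm s x \<le> nrm s (mv s B x)"
proof (cases "s = 1")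
  case True
  then show ?thesis
    by (simp add: nrm_def mv_def frob_sq_def norm_mult power_mult_distrib)
next
  case False
  hence s2: "real s \<ge> 2" using s1 by simp
  define t where "t = real s - frob_sq s B"
  define n where "n = nrm s x"
  define q where "q = n - nrm s (mv s B x)"
  have n0: "n \<ge> 0" unfolding n_def by (rule nrm_nonneg)
  have NB1: "nrm s (Nop s B x) \<le> q" unfolding q_def n_def by (rule N1[OF HBy])
  have T0: "0 \<le> (\<Sum>a<s. nrm s (Nop s B (ev a)))" by (simp add: sum_nonneg nrm_nonneg)
  have Tt: "(\<Sum>a<s. nrm s (Nop s B (ev a))) \<le> t" unfolding t_def by (rule Nbound2[OF HBy])
  have t0: "t \<ge> 0" using T0 Tt by simp
  have NB2: "nrm s (Nop s B x) \<le> t * n"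
    using Nbound1[of s B x] Tt n0 unfolding n_def
    by (meson mult_right_mono order_trans)
  have q0: "q \<ge> 0" using NB1 nrm_nonneg[of s "Nop s B x"] by simp
  have "q^2 \<le> n * nrm s (Nop s B x)" unfolding q_def n_def by (rule Nq2)
  also have "\<dots> \<le> n * (t * n)" using NB2 n0 by (simp add: mult_left_mono)
  finally have qq: "q^2 \<le> (sqrt t * n)^2" using t0 by (simp add: power2_eq_square mult_ac)
  have qle: "q \<le> sqrt t * n"
    using qq q0 t0 n0 by (meson power2_le_imp_le real_sqrt_ge_zero mult_nonneg_nonneg)
  have st: "(sqrt t)^2 = t" using t0 by simp
  have key: "(1 - t) / real s \<le> 1 - sqrt t"
  proof -
    have "(1 - t) / real s \<le> (1 - t) / 2"
      using t1 s2 unfolding t_def by (intro divide_left_mono) auto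
    also have "\<dots> \<le> 1 - sqrt t"
    proof -
      have h: "0 \<le> (1 - sqrt t)^2" by simp
      have "(1 - sqrt t)^2 = 1 - 2 * sqrt t + t" using st by (simp add: power2_diff)
      then show ?thesis using h by simp
    qed
    finally show ?thesis .
  qed
  have "(1 - t) / real s * n \<le> (1 - sqrt t) * n" using key n0 by (rule mult_right_mono)
  also have "\<dots> \<le> nrm s (mv s B x)" using qle unfolding q_def by (simp add: algebra_simps)
  finally show ?thesis unfolding t_def n_def .
qed


theorem proposition3p7:
  fixes d s :: nat and \<alpha> \<beta> :: "nat \<Rightarrow> real" and i :: nat
  assumes "d \<ge> 2" and "s \<ge> 1"
    and "(\<alpha>, \<beta>) \<in> Brac d s"
    and "i < d"
    and "\<beta> i \<ge> 1 - 1 / real s"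
  shows "sqrt (\<alpha> i) * sqrt (real s * \<beta> i - (real s - 1))
           \<le> real s * (\<Sum>j\<in>{..<d} - {i}. sqrt (\<alpha> j * \<beta> j))"
proof -
  note s1 = assms(2) and id = assms(4) and bi = assms(5)
  obtain A B :: "nat \<Rightarrow> nat \<Rightarrow> nat \<Rightarrow> complex" where
    sa: "simplex d \<alpha>" and sb: "simplex d \<beta>" and
    HA: "\<forall>a<s. \<forall>b<s. mat_sum_prod_adj d s A A a b = (if a = b then 1 else 0)" and
    HB: "\<forall>a<s. \<forall>b<s. mat_sum_prod_adj d s B B a b = (if a = b then 1 else 0)" and
    HAB: "\<forall>a<s. \<forall>b<s. mat_sum_prod_adj d s A B a b = 0" and
    HN: "\<forall>j<d. frob_sq s (A j) / real s = \<alpha> j \<and> frob_sq s (B j) / real s = \<beta> j"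
    using assms(3) unfolding Brac_def by blast
  have spos: "real s > 0" using s1 by simp
  have fA: "frob_sq s (A j) = real s * \<alpha> j" if "j < d" for j
    using HN that spos by (auto simp: field_simps)
  have fB: "frob_sq s (B j) = real s * \<beta> j" if "j < d" for j
    using HN that spos by (auto simp: field_simps)
  have a0: "\<alpha> j \<ge> 0" if "j < d" for j using sa that by (simp add: simplex_def)
  have b0: "\<beta> j \<ge> 0" if "j < d" for j using sb that by (simp add: simplex_def)
  define J where "J = {..<d} - {i}"
  define S2 where "S2 = {..<s} \<times> {..<s}"
  define P where "P j a b = (\<Sum>k<s. A j a k * cnj (B j b k))" for j a b
  define FP where "FP j = L2_set (\<lambda>p. cmod (P j (fst p) (snd p))) S2" for j
  have FPsq: "(FP j)^2 = (\<Sum>a<s. \<Sum>b<s. (cmod (P j a b))^2)" for j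
  proof -
    have "(FP j)^2 = (\<Sum>p\<in>S2. (cmod (P j (fst p) (snd p)))^2)"
      unfolding FP_def L2_set_def by (simp add: sum_nonneg)
    also have "\<dots> = (\<Sum>a<s. \<Sum>b<s. (cmod (P j a b))^2)"
      unfolding S2_def by (simp add: sum.cartesian_product case_prod_beta)
    finally show ?thesis .
  qed
  have FP0: "FP j \<ge> 0" for j unfolding FP_def by simp
  have FPup: "FP j \<le> real s * sqrt (\<alpha> j * \<beta> j)" if "j < d" for j
  proof -
    have "(FP j)^2 \<le> (\<Sum>a<s. \<Sum>b<s. (\<Sum>k<s. (cmod (A j a k))^2) * (\<Sum>k<s. (cmod (B j b k))^2))"
      unfolding FPsq P_def
    proof (intro sum_mono)
      fix a b
      show "(cmod (\<Sum>k<s. A j a k * cnj (B j b k)))\<^sup>2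
          \<le> (\<Sum>k<s. (cmod (A j a k))\<^sup>2) * (\<Sum>k<s. (cmod (B j b k))\<^sup>2)"
        using cs_complex[of "A j a" "\<lambda>k. cnj (B j b k)" "{..<s}"] by simp
    qed
    also have "\<dots> = frob_sq s (A j) * frob_sq s (B j)"
      unfolding frob_sq_def by (rule sum_product[symmetric])
    also have "\<dots> = (real s * sqrt (\<alpha> j * \<beta> j))^2"
      using fA[OF that] fB[OF that] a0[OF that] b0[OF that]
      by (simp add: power_mult_distrib power2_eq_square)
    finally have "(FP j)^2 \<le> (real s * sqrt (\<alpha> j * \<beta> j))^2" .
    thus ?thesis using FP0[of j] spos
      by (meson power2_le_imp_le mult_nonneg_nonneg real_sqrt_ge_zero less_imp_le a0 b0 that)
  qed
  have Psum: "P i a b = - (\<Sum>j\<in>J. P j a b)" if "a < s" "b < s" for a b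
  proof -
    have "(\<Sum>j<d. P j a b) = 0"
      using HAB that unfolding mat_sum_prod_adj_def P_def by simp
    moreover have "(\<Sum>j<d. P j a b) = P i a b + (\<Sum>j\<in>J. P j a b)"
      unfolding J_def using id by (simp add: sum.remove)
    ultimately show ?thesis by (simp add: eq_neg_iff_add_eq_0)
  qed
  have "FP i = L2_set (\<lambda>p. cmod (\<Sum>j\<in>J. P j (fst p) (snd p))) S2"
    unfolding FP_def by (rule L2_set_cong) (auto simp: S2_def Psum)
  also have "\<dots> \<le> L2_set (\<lambda>p. \<Sum>j\<in>J. cmod (P j (fst p) (snd p))) S2"
    by (rule L2_set_mono) (auto intro: norm_sum)
  also have "\<dots> \<le> (\<Sum>j\<in>J. FP j)"
    unfolding FP_def by (rule L2_set_sum_le) (simp add: J_def)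
  also have "\<dots> \<le> (\<Sum>j\<in>J. real s * sqrt (\<alpha> j * \<beta> j))"
    by (rule sum_mono) (auto simp: J_def FPup)
  finally have up: "FP i \<le> real s * (\<Sum>j\<in>J. sqrt (\<alpha> j * \<beta> j))"
    by (simp add: sum_distrib_left)
  have HBy: "nrm s (mva s (B i) y) \<le> nrm s y" for y
  proof -
    have "nrm s (mva s (B i) y) \<le> (\<Sum>j<d. nrm s (mva s (B j) y))"
      using id by (intro member_le_sum) (auto simp: nrm_nonneg)
    thus ?thesis using sumB[OF HB] by simp
  qed
  have t1: "real s - frob_sq s (B i) \<le> 1"
    using bi spos fB[OF id] by (simp add: field_simps)
  define c where "c = (1 - (real s - frob_sq s (B i))) / real s"
  have low1: "c * nrm s (\<lambda>k. cnj (A i a k)) \<le> nrm s (mv s (B i) (\<lambda>k. cnj (A i a k)))" for a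
    unfolding c_def by (rule lower[OF s1 HBy t1])
  have mvP: "nrm s (mv s (B i) (\<lambda>k. cnj (A i a k))) = (\<Sum>b<s. (cmod (P i a b))^2)" for a
  proof -
    have "mv s (B i) (\<lambda>k. cnj (A i a k)) b = cnj (P i a b)" for b
      unfolding mv_def P_def by (simp add: mult.commute)
    thus ?thesis by (simp add: nrm_def)
  qed
  have "c * frob_sq s (A i) = (\<Sum>a<s. c * nrm s (\<lambda>k. cnj (A i a k)))"
    unfolding frob_sq_def nrm_def by (simp add: sum_distrib_left)
  also have "\<dots> \<le> (\<Sum>a<s. nrm s (mv s (B i) (\<lambda>k. cnj (A i a k))))"
    by (rule sum_mono) (rule low1)
  also have "\<dots> = (FP i)^2" by (simp add: FPsq mvP)
  finally have lowsq: "c * frob_sq s (A i) \<le> (FP i)^2" .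
  have ceq: "c * frob_sq s (A i) = \<alpha> i * (real s * \<beta> i - (real s - 1))"
    unfolding c_def using fA[OF id] fB[OF id] spos by (simp add: field_simps)
  have "sqrt (\<alpha> i) * sqrt (real s * \<beta> i - (real s - 1))
      = sqrt (\<alpha> i * (real s * \<beta> i - (real s - 1)))" by (simp add: real_sqrt_mult)
  also have "\<dots> \<le> sqrt ((FP i)^2)" using lowsq ceq by (metis real_sqrt_le_mono)
  also have "\<dots> = FP i" using FP0[of i] by simp
  also have "\<dots> \<le> real s * (\<Sum>j\<in>J. sqrt (\<alpha> j * \<beta> j))" by (rule up)
  finally show ?thesis unfolding J_def .
qed

end
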